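(* For integers $n \ge k \ge 1$, let $\Gamma(n,k)$ denote the maximum number of edges of a (simple, undirected) graph $G$ on $n$ vertices, taken over all such graphs $G$ together with $k$ vertex-disjoint directed paths $P_1,\ldots,P_k$ in $G$ covering $V(G)$, subject to the constraint that the digraph $D(G,P_1,\ldots,P_k)$ is acyclic. Then $\Gamma(n,k) = kn - \binom{k+1}{2}$ for all integers $n \ge k \ge 1$.
   Context: Graphs are finite, simple and undirected; $xy$ denotes an edge and $y \sim z$ means $y$ and $z$ are adjacent in $G$. A directed path in $G$ is a sequence $v_1 \to v_2 \to \cdots \to v_m$ ($m \ge 1$; a path with $m=1$ is trivial) of distinct vertices of $G$ with $v_t v_{t+1} \in E(G)$ for each $t$; its arcs are $v_t \to v_{t+1}$. The paths $P_1,\ldots,P_k$ are vertex-disjoint and cover $V(G)$, i.e. every vertex of $G$ lies in exactly one $P_j$. The digraph $D = D(G,P_1,\ldots,P_k)$ has vertex set $V(G)$, and for distinct vertices $x,y$ there is an arc $x \to y$ in $D$ if and only if either some path $P_j$ contains the arc $x \to y$, or there is a vertex $z$ and a path $P_j$ such that $x \to z$ is an arc of $P_j$ and $y \sim z$ in $G$. $D$ is acyclic if it contains no directed cycle. *)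

theory Defs
  imports Main
begin

definition simple_graph :: "'a set \<Rightarrow> 'a set set \<Rightarrow> bool" where
  "simple_graph V E \<longleftrightarrow> (\<forall>e\<in>E. e \<subseteq> V \<and> card e = 2)"

definition adj :: "'a set set \<Rightarrow> 'a \<Rightarrow> 'a \<Rightarrow> bool" where
  "adj E x y \<longleftrightarrow> {x, y} \<in> E"

definition dir_path :: "'a set set \<Rightarrow> 'a list \<Rightarrow> bool" where
  "dir_path E p \<longleftrightarrow> p \<noteq> [] \<and> distinct p \<and>
     (\<forall>t. Suc t < length p \<longrightarrow> adj E (p ! t) (p ! Suc t))"

definition path_arcs :: "'a list \<Rightarrow> ('a \<times> 'a) set" where
  "path_arcs p = {(p ! t, p ! Suc t) | t. Suc t < length p}"

definition path_cover :: "'a set \<Rightarrow> 'a set set \<Rightarrow> 'a list list \<Rightarrow> bool" where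
  "path_cover V E Ps \<longleftrightarrow> (\<forall>p\<in>set Ps. dir_path E p) \<and>
     distinct (concat Ps) \<and> set (concat Ps) = V"

definition D_arcs :: "'a set set \<Rightarrow> 'a list list \<Rightarrow> ('a \<times> 'a) set" where
  "D_arcs E Ps = {(x, y). x \<noteq> y \<and>
     ((\<exists>p\<in>set Ps. (x, y) \<in> path_arcs p) \<or>
      (\<exists>z. \<exists>p\<in>set Ps. (x, z) \<in> path_arcs p \<and> adj E y z))}"

definition Gamma :: "nat \<Rightarrow> nat \<Rightarrow> nat" where
  "Gamma n k = Max {card E | E Ps. simple_graph {0..<n} E \<and> length Ps = k \<and>
      path_cover {0..<n} E Ps \<and> acyclic (D_arcs E Ps)}"

end

theory Submission imports Defs begin

lemma path_arcs_iff: "(a,b) \<in> path_arcs p \<longleftrightarrow> (\<exists>t. Suc t < length p \<and> a = p!t \<and> b = p!Suc t)"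
  unfolding path_arcs_def by blast

lemma path_arcs_tl: "path_arcs p' \<subseteq> path_arcs (s # p')"
  unfolding path_arcs_def by force

lemma dir_path_del:
  assumes "dir_path E q" "s \<notin> set q"
  shows "dir_path {e\<in>E. s \<notin> e} q"
  using assms unfolding dir_path_def adj_def
  by (metis (no_types, lifting) Suc_lessD insert_iff mem_Collect_eq nth_mem singletonD)

lemma dir_path_tl:
  assumes "dir_path E (s # p')" "p' \<noteq> []"
  shows "dir_path E p'"
  using assms unfolding dir_path_def by auto

lemma length_le_concat: "\<forall>p\<in>set Ps. p \<noteq> [] \<Longrightarrow> length Ps \<le> length (concat Ps)"
proof (induction Ps)
  case (Cons a Ps)
  then have "length a \<ge> 1" by (cases a) auto
  then show ?case using Cons by simp
qed simp

lemma D_sub_V: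
  assumes "simple_graph V E" "path_cover V E Ps"
  shows "D_arcs E Ps \<subseteq> V \<times> V"
proof (rule subrelI)
  fix x y assume xy: "(x, y) \<in> D_arcs E Ps"
  have inV: "a \<in> V" if "a \<in> set p" "p \<in> set Ps" for a p
    using assms(2) that unfolding path_cover_def by auto
  from xy obtain p z where p: "p \<in> set Ps" and dj: "(x,y) \<in> path_arcs p \<or> ((x,z) \<in> path_arcs p \<and> adj E y z)"
    unfolding D_arcs_def by blast
  from dj show "(x,y) \<in> V \<times> V"
  proof
    assume "(x,y) \<in> path_arcs p"
    then show ?thesis using inV[OF _ p] unfolding path_arcs_def by auto
  next
    assume h: "(x,z) \<in> path_arcs p \<and> adj E y z"
    then have "x \<in> V" using inV[OF _ p] unfolding path_arcs_def by auto
    moreover have "y \<in> V" using h assms(1) unfolding adj_def simple_graph_def by auto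
    ultimately show ?thesis by simp
  qed
qed

lemma upper:
  assumes "finite V" "simple_graph V E" "path_cover V E Ps" "acyclic (D_arcs E Ps)"
  shows "2 * card E + length Ps * (length Ps + 1) \<le> 2 * length Ps * card V"
  using assms
proof (induction "card V" arbitrary: V E Ps rule: less_induct)
  case less
  have finE: "finite E"
  proof -
    have "E \<subseteq> Pow V" using less.prems(2) unfolding simple_graph_def by auto
    moreover have "finite (Pow V)" using less.prems(1) by simp
    ultimately show ?thesis by (rule finite_subset)
  qed
  show ?case
  proof (cases "V = {}")
    case True
    have "E = {}" using less.prems(2) True unfolding simple_graph_def by fastforce
    moreover have "Ps = []"
    proof -
      have "\<forall>p\<in>set Ps. p \<noteq> []" using less.prems(3) unfolding path_cover_def dir_path_def by auto
      moreover have "concat Ps = []" using less.prems(3) True unfolding path_cover_def by auto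
      ultimately show ?thesis by (cases Ps) auto
    qed
    ultimately show ?thesis by simp
  next
    case False
    have fin: "finite (D_arcs E Ps)"
      using D_sub_V[OF less.prems(2,3)] less.prems(1) finite_SigmaI finite_subset by blast
    have wf: "wf (D_arcs E Ps)" using finite_acyclic_wf[OF fin less.prems(4)] .
    obtain s where sV: "s \<in> V" and smin: "\<And>y. (y, s) \<in> D_arcs E Ps \<Longrightarrow> y \<notin> V"
      using wfE_min[OF wf, of _ V] False by blast
    have nosrc: "(y, s) \<notin> D_arcs E Ps" for y
      using smin D_sub_V[OF less.prems(2,3)] by blast
    have pc: "\<forall>p\<in>set Ps. dir_path E p" "distinct (concat Ps)" "set (concat Ps) = V"
      using less.prems(3) unfolding path_cover_def by auto
    obtain p where p: "p \<in> set Ps" "s \<in> set p" using pc(3) sV by auto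
    obtain A B where AB: "Ps = A @ p # B" using split_list[OF p(1)] by blast
    have dp: "dir_path E p" using pc(1) p by auto
    have shd: "s = hd p"
    proof (rule ccontr)
      assume ne: "s \<noteq> hd p"
      obtain i where i: "i < length p" "p ! i = s" using p(2) by (meson in_set_conv_nth)
      have "i \<noteq> 0" using ne i dp unfolding dir_path_def by (metis hd_conv_nth)
      then obtain j where j: "i = Suc j" by (cases i) auto
      have "distinct p" using dp unfolding dir_path_def by auto
      then have "p ! j \<noteq> s" using i j by (metis Suc_lessD n_not_Suc_n nth_eq_iff_index_eq)
      moreover have "(p ! j, s) \<in> path_arcs p" using i j unfolding path_arcs_def by auto
      ultimately have "(p ! j, s) \<in> D_arcs E Ps" using p(1) unfolding D_arcs_def by auto
      then show False using nosrc by blast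
    qed
    obtain p' where pp: "p = s # p'" using shd dp unfolding dir_path_def by (cases p) auto
    define E' where "E' = {e\<in>E. s \<notin> e}"
    define Ps' where "Ps' = A @ (if p' = [] then [] else [p']) @ B"
    have dist: "distinct (concat A @ s # p' @ concat B)" using pc(2) AB pp by simp
    have sA: "\<forall>q\<in>set A. s \<notin> set q" and sB: "\<forall>q\<in>set B. s \<notin> set q" using dist by auto
    have sp': "s \<notin> set p'" using dist by auto
    have setV: "V = set (concat A) \<union> {s} \<union> set p' \<union> set (concat B)" using pc(3) AB pp by auto
    have concat': "concat Ps' = concat A @ p' @ concat B" unfolding Ps'_def by auto
    have pc': "path_cover (V - {s}) E' Ps'"
      unfolding path_cover_def
    proof (intro conjI)
      show "\<forall>q\<in>set Ps'. dir_path E' q"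
      proof
        fix q assume q: "q \<in> set Ps'"
        show "dir_path E' q"
        proof (cases "q = p'")
          case True
          then have "p' \<noteq> []" using q unfolding Ps'_def using pc(1) AB by (auto simp: dir_path_def)
          then show ?thesis using True dir_path_del[OF dir_path_tl[OF dp[unfolded pp]] sp'] E'_def by simp
        next
          case False
          then have "q \<in> set A \<union> set B" using q unfolding Ps'_def by (auto split: if_splits)
          then have "dir_path E q" "s \<notin> set q" using sA sB pc(1) AB by auto
          then show ?thesis using dir_path_del E'_def by simp
        qed
      qed
      show "distinct (concat Ps')" using dist concat' by auto
      show "set (concat Ps') = V - {s}" using dist concat' setV by auto
    qed
    have sg': "simple_graph (V - {s}) E'" using less.prems(2) unfolding simple_graph_def E'_def by auto
    have Dsub: "D_arcs E' Ps' \<subseteq> D_arcs E Ps"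
    proof -
      have "path_arcs q \<subseteq> (\<Union>r\<in>set Ps. path_arcs r)" if "q \<in> set Ps'" for q
      proof (cases "q = p'")
        case True then show ?thesis using path_arcs_tl[of p' s] AB pp by auto
      next
        case False
        then have "q \<in> set A \<union> set B" using that unfolding Ps'_def by (auto split: if_splits)
        then show ?thesis using AB by auto
      qed
      moreover have "adj E' y z \<Longrightarrow> adj E y z" for y z unfolding adj_def E'_def by auto
      ultimately show ?thesis unfolding D_arcs_def by blast
    qed
    have ac': "acyclic (D_arcs E' Ps')" using acyclic_subset[OF less.prems(4) Dsub] .
    have IH: "2 * card E' + length Ps' * (length Ps' + 1) \<le> 2 * length Ps' * card (V - {s})"
      using less.hyps[OF _ _ sg' pc' ac'] less.prems(1) sV by (meson card_Diff1_less finite_Diff)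
    define Es where "Es = {e\<in>E. s \<in> e}"
    have cardE: "card E = card E' + card Es"
    proof -
      have "E = E' \<union> Es" "E' \<inter> Es = {}" unfolding E'_def Es_def by auto
      then show ?thesis using finE card_Un_disjoint by (metis finite_Un)
    qed
    have Es_sub: "Es \<subseteq> (\<lambda>v. {s, v}) ` (hd ` set (A @ B) \<union> set (take 1 p'))"
    proof
      fix e assume e: "e \<in> Es"
      then have eE: "e \<in> E" "s \<in> e" unfolding Es_def by auto
      then have "e \<subseteq> V" "card e = 2" using less.prems(2) unfolding simple_graph_def by auto
      then obtain v where ev: "e = {s, v}" "v \<noteq> s" "v \<in> V" using eE(2) unfolding card_2_iff
        by (metis doubleton_eq_iff insert_iff insert_subset singletonD)
      obtain q where q: "q \<in> set Ps" "v \<in> set q" using pc(3) ev(3) by auto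
      obtain t where t: "t < length q" "q ! t = v" using q(2) by (meson in_set_conv_nth)
      have "v \<in> hd ` set (A @ B) \<union> set (take 1 p')"
      proof (cases t)
        case 0
        then have "v = hd q" using t by (simp add: hd_conv_nth)
        then have "q \<noteq> p" using pp ev(2) by auto
        then have "q \<in> set (A @ B)" using q(1) AB by auto
        then show ?thesis using \<open>v = hd q\<close> by auto
      next
        case (Suc j)
        have arc: "(q ! j, v) \<in> path_arcs q" using t Suc unfolding path_arcs_def by auto
        have adj: "adj E s v" using eE ev unfolding adj_def by auto
        have "q ! j = s"
        proof (rule ccontr)
          assume "q ! j \<noteq> s"
          then have "(q ! j, s) \<in> D_arcs E Ps" using arc adj q(1) unfolding D_arcs_def by blast
          then show False using nosrc by blast
        qed
        then have "s \<in> set q" using t Suc by (metis Suc_lessD nth_mem)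
        then have "q = p" using q(1) AB sA sB by auto
        then have "j = 0" using \<open>q ! j = s\<close> t Suc dp pp unfolding dir_path_def
          by (metis Suc_lessD distinct.simps(2) nth_Cons_0 nth_eq_iff_index_eq length_greater_0_conv list.discI)
        then show ?thesis using t Suc \<open>q = p\<close> pp by (cases p') auto
      qed
      then show "e \<in> (\<lambda>v. {s, v}) ` (hd ` set (A @ B) \<union> set (take 1 p'))" using ev by auto
    qed
    define m where "m = length A + length B"
    define j where "j = length (take 1 p')"
    have cardEs: "card Es \<le> m + j"
    proof -
      have fX: "finite (hd ` set (A @ B) \<union> set (take 1 p'))" by simp
      have "card Es \<le> card ((\<lambda>v. {s, v}) ` (hd ` set (A @ B) \<union> set (take 1 p')))"
        using Es_sub fX by (intro card_mono) auto
      also have "\<dots> \<le> card (hd ` set (A @ B) \<union> set (take 1 p'))"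
        using fX by (rule card_image_le)
      also have "\<dots> \<le> card (hd ` set (A @ B)) + card (set (take 1 p'))" by (rule card_Un_le)
      also have "\<dots> \<le> m + j"
      proof -
        have "card (hd ` set (A @ B)) \<le> card (set (A @ B))" by (rule card_image_le) simp
        also have "\<dots> \<le> m" unfolding m_def using card_length[of "A @ B"] by simp
        finally have 1: "card (hd ` set (A @ B)) \<le> m" .
        have 2: "card (set (take 1 p')) \<le> j" unfolding j_def by (rule card_length)
        show ?thesis using 1 2 by simp
      qed
      finally show ?thesis .
    qed
    have lenPs: "length Ps = m + 1" unfolding m_def AB by simp
    have lenPs': "length Ps' = m + j" unfolding m_def j_def Ps'_def by (cases p') auto
    have cV: "card V = Suc (card (V - {s}))" using card_Suc_Diff1[OF less.prems(1) sV] by (rule sym)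
    have kn: "length Ps \<le> card V"
    proof -
      have "\<forall>p\<in>set Ps. p \<noteq> []" using pc(1) unfolding dir_path_def by auto
      then have "length Ps \<le> length (concat Ps)" by (rule length_le_concat)
      also have "\<dots> = card V" using pc(2,3) distinct_card by fastforce
      finally show ?thesis .
    qed
    define n' where "n' = card (V - {s})"
    have j01: "j = 0 \<or> j = 1" unfolding j_def by (cases p') auto
    show ?thesis
    proof -
      have IH': "2 * card E' + (m + j) * (m + j + 1) \<le> 2 * (m + j) * n'" using IH lenPs' n'_def by simp
      have kn': "m \<le> n'" using kn lenPs cV n'_def by simp
      show ?thesis unfolding lenPs cV n'_def[symmetric] cardE using j01
      proof
        assume "j = 0"
        then show "2 * (card E' + card Es) + (m + 1) * (m + 1 + 1) \<le> 2 * (m + 1) * Suc n'"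
          using IH' kn' cardEs by (simp add: algebra_simps)
      next
        assume "j = 1"
        then show "2 * (card E' + card Es) + (m + 1) * (m + 1 + 1) \<le> 2 * (m + 1) * Suc n'"
          using IH' kn' cardEs by (simp add: algebra_simps)
      qed
    qed
  qed
qed


definition cE :: "nat \<Rightarrow> nat \<Rightarrow> nat set set" where
  "cE k n = {{i,j} | i j. i < j \<and> j < n \<and> (Suc i < k \<or> j = Suc i)}"

lemma cE_Suc: "cE k (Suc n) = cE k n \<union> (\<lambda>i. {i, n}) ` {i. i < n \<and> (Suc i < k \<or> n = Suc i)}"
  unfolding cE_def by (auto simp: less_Suc_eq)

lemma cE_sub: "e \<in> cE k n \<Longrightarrow> e \<subseteq> {0..<n}"
  unfolding cE_def by auto

lemma finite_cE: "finite (cE k n)"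
proof -
  have "cE k n \<subseteq> Pow {0..<n}" using cE_sub by blast
  then show ?thesis by (rule finite_subset) simp
qed

lemma card_cE_Suc: "card (cE k (Suc n)) = card (cE k n) + card {i. i < n \<and> (Suc i < k \<or> n = Suc i)}"
proof -
  let ?S = "{i. i < n \<and> (Suc i < k \<or> n = Suc i)}"
  have inj: "inj_on (\<lambda>i. {i, n}) ?S" by (auto simp: inj_on_def doubleton_eq_iff)
  have disj: "cE k n \<inter> (\<lambda>i. {i, n}) ` ?S = {}" using cE_sub by fastforce
  have "card (cE k (Suc n)) = card (cE k n) + card ((\<lambda>i. {i, n}) ` ?S)"
    unfolding cE_Suc by (rule card_Un_disjoint[OF finite_cE _ disj]) simp
  also have "\<dots> = card (cE k n) + card ?S" using card_image[OF inj] by simp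
  finally show ?thesis .
qed

lemma choose2_Suc: "(Suc m choose 2) = (m choose 2) + m"
  by (simp add: numeral_2_eq_2)

lemma two_choose2: "2 * (m choose 2) = m * (m - 1)"
proof (induction m)
  case (Suc m)
  have "2 * (Suc m choose 2) = m * (m - 1) + 2 * m" using Suc.IH by (simp add: choose2_Suc)
  also have "\<dots> = Suc m * m" by (cases m) (simp_all add: algebra_simps)
  finally show ?case by simp
qed simp

lemma card_cE_small: "n \<le> k \<Longrightarrow> card (cE k n) = n choose 2"
proof (induction n)
  case 0 then show ?case by (simp add: cE_def)
next
  case (Suc n)
  have "{i. i < n \<and> (Suc i < k \<or> n = Suc i)} = {..<n}" using Suc.prems by auto
  then show ?case using Suc card_cE_Suc[of k n] choose2_Suc by simp
qed

lemma card_cE_big: assumes k1: "1 \<le> k" and kn: "k \<le> n" shows "2 * card (cE k n) + k * (k + 1) = 2 * k * n"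
  using kn
proof (induction n rule: dec_induct)
  case base
  have "2 * card (cE k k) = k * (k - 1)" using card_cE_small[of k k] two_choose2 by simp
  then show ?case using k1 by (cases k) (auto simp: algebra_simps)
next
  case (step n)
  have "{i. i < n \<and> (Suc i < k \<or> n = Suc i)} = {..<k - 1} \<union> {n - 1}" using step.hyps k1 by auto
  moreover have "card ({..<k - 1} \<union> {n - 1}) = k" using step.hyps k1 by simp
  ultimately have "card (cE k (Suc n)) = card (cE k n) + k" using card_cE_Suc[of k n] by simp
  then show ?case using step.IH k1 by (simp add: algebra_simps)
qed

definition cPs :: "nat \<Rightarrow> nat \<Rightarrow> nat list list" where
  "cPs k n = map (\<lambda>i. [i]) [0..<k - 1] @ [rev [k - 1..<n]]"

lemma concat_singl: "concat (map (\<lambda>i. [i]) xs) = xs"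
  by (induction xs) auto

lemma constr:
  assumes "1 \<le> k" "k \<le> n"
  shows "simple_graph {0..<n} (cE k n) \<and> length (cPs k n) = k \<and>
      path_cover {0..<n} (cE k n) (cPs k n) \<and> acyclic (D_arcs (cE k n) (cPs k n))"
proof (intro conjI)
  show "simple_graph {0..<n} (cE k n)" unfolding simple_graph_def cE_def by auto
  show "length (cPs k n) = k" unfolding cPs_def using assms by simp
  have dp: "dir_path (cE k n) (rev [k - 1..<n])"
    unfolding dir_path_def
  proof (intro conjI allI impI)
    show "rev [k - 1..<n] \<noteq> []" using assms by simp
    show "distinct (rev [k - 1..<n])" by simp
    fix t assume t: "Suc t < length (rev [k - 1..<n])"
    then have e1: "rev [k - 1..<n] ! t = n - 1 - t" and e2: "rev [k - 1..<n] ! Suc t = n - 2 - t"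
      by (auto simp: rev_nth)
    have "{n - 2 - t, n - 1 - t} \<in> cE k n" unfolding cE_def using t
      by (intro CollectI exI[of _ "n - 2 - t"] exI[of _ "n - 1 - t"]) auto
    then show "adj (cE k n) (rev [k - 1..<n] ! t) (rev [k - 1..<n] ! Suc t)"
      unfolding e1 e2 adj_def by (simp add: insert_commute)
  qed
  show "path_cover {0..<n} (cE k n) (cPs k n)"
    unfolding path_cover_def cPs_def using dp assms
    by (auto simp: concat_singl dir_path_def)
  have arcs: "(x, y) \<in> D_arcs (cE k n) (cPs k n) \<Longrightarrow> y < x" for x y
  proof -
    assume xy: "(x, y) \<in> D_arcs (cE k n) (cPs k n)"
    have pa: "(a, b) \<in> path_arcs q \<Longrightarrow> q \<in> set (cPs k n) \<Longrightarrow> k \<le> a \<and> b = a - 1 \<and> a < n" for a b q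
    proof -
      assume ab: "(a, b) \<in> path_arcs q" and q: "q \<in> set (cPs k n)"
      then have "q = rev [k - 1..<n]" unfolding cPs_def path_arcs_def by auto
      then show ?thesis using ab unfolding path_arcs_def by (auto simp: rev_nth)
    qed
    from xy obtain q z where q: "q \<in> set (cPs k n)" and neq: "x \<noteq> y"
      and dj: "(x, y) \<in> path_arcs q \<or> ((x, z) \<in> path_arcs q \<and> adj (cE k n) y z)"
      unfolding D_arcs_def by blast
    from dj show "y < x"
    proof
      assume "(x, y) \<in> path_arcs q"
      then have "k \<le> x \<and> y = x - 1" using pa[OF _ q] by blast
      then show ?thesis using assms(1) by simp
    next
      assume h: "(x, z) \<in> path_arcs q \<and> adj (cE k n) y z"
      then have z: "k \<le> x" "z = x - 1" using pa q by auto
      from h obtain i j where ij: "{y, z} = {i, j}" "i < j" "j < n" "Suc i < k \<or> j = Suc i"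
        unfolding adj_def cE_def by blast
      then show ?thesis using z neq assms(1) by (auto simp: doubleton_eq_iff)
    qed
  qed
  have "(a, b) \<in> (D_arcs (cE k n) (cPs k n))\<^sup>+ \<Longrightarrow> b < a" for a b
    by (induction rule: trancl_induct) (auto dest: arcs)
  then show "acyclic (D_arcs (cE k n) (cPs k n))" unfolding acyclic_def by blast
qed

theorem theorem1:
  fixes n k :: nat
  assumes "1 \<le> k" and "k \<le> n"
  shows "Gamma n k = k * n - ((k + 1) choose 2)"
proof -
  let ?S = "{card E | E Ps. simple_graph {0..<n} E \<and> length Ps = k \<and>
      path_cover {0..<n} E Ps \<and> acyclic (D_arcs E Ps)}"
  have c2: "2 * ((k + 1) choose 2) = k * (k + 1)" using two_choose2[of "k + 1"] by simp
  have fin: "finite ?S"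
  proof -
    have "?S \<subseteq> card ` Pow (Pow {0..<n})" unfolding simple_graph_def by auto
    then show ?thesis by (rule finite_subset) simp
  qed
  have ub: "y \<le> k * n - ((k + 1) choose 2)" if "y \<in> ?S" for y
  proof -
    from that obtain E Ps where y: "y = card E" "simple_graph {0..<n} E" "length Ps = k"
      "path_cover {0..<n} E Ps" "acyclic (D_arcs E Ps)" by blast
    have "2 * card E + k * (k + 1) \<le> 2 * k * n" using upper[OF _ y(2) y(4) y(5)] y(3) by simp
    then show ?thesis using c2 y(1) by simp
  qed
  have mem: "k * n - ((k + 1) choose 2) \<in> ?S"
  proof -
    have "card (cE k n) = k * n - ((k + 1) choose 2)" using card_cE_big[OF assms] c2 by simp
    then show ?thesis using constr[OF assms] by (intro CollectI exI[of _ "cE k n"] exI[of _ "cPs k n"]) simp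
  qed
  show ?thesis unfolding Gamma_def by (rule Max_eqI[OF fin ub mem])
qed

end
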